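(* Let $n=2m-1$ with $m\ge1$ and let $Q$ be the $(n+1)\times(n+1)$ matrix with entries $Q_{ij}=0$ if $i+j<n+2$ and $Q_{ij}=(q-1+\delta_{i+j,n+2})q^{\frac12(n^2-n)+j-2}$ if $i+j\ge n+2$ (the quotient matrix of the opposition graph on maximal flags of $\mathrm{PG}(n,q)$ with respect to the types relative to a fixed point). For $j\in[m]$ let $$v_j=(\underbrace{0,\dots,0}_{m-j},\underbrace{q^j,\dots,q^j}_{j},\underbrace{-1,\dots,-1}_{j},\underbrace{0,\dots,0}_{m-j})^\top.$$ Then $v_j$ is an eigenvector of $Q$ with eigenvalue $-q^{(n^2-1)/2}$.
   Context: $\delta$ is the Kronecker delta; $[m]=\{1,\dots,m\}$. *)

theory Defs
  imports Complex_Main "HOL-Computational_Algebra.Primes" "Jordan_Normal_Form.Char_Poly"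
begin

text \<open>Entry Q_{ij} of the quotient matrix, with 1-based indices i, j in [n+1].\<close>
definition Q_entry :: "nat \<Rightarrow> nat \<Rightarrow> nat \<Rightarrow> nat \<Rightarrow> real" where
  "Q_entry n q i j =
     (if i + j < n + 2 then 0
      else (real q - 1 + (if i + j = n + 2 then 1 else 0)) *
           real q powi (int ((n^2 - n) div 2) + int j - 2))"

text \<open>The (n+1) x (n+1) matrix Q (JNF matrices are 0-indexed, so shift by one).\<close>
definition Q_mat :: "nat \<Rightarrow> nat \<Rightarrow> real mat" where
  "Q_mat n q = mat (n + 1) (n + 1) (\<lambda>(i, j). Q_entry n q (i + 1) (j + 1))"

text \<open>Entry k (1-based, k in [2m]) of v_j.\<close>
definition v_entry :: "nat \<Rightarrow> nat \<Rightarrow> nat \<Rightarrow> nat \<Rightarrow> real" where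
  "v_entry m q j k =
     (if m - j < k \<and> k \<le> m then real q ^ j
      else if m < k \<and> k \<le> m + j then -1
      else 0)"

definition v_vec :: "nat \<Rightarrow> nat \<Rightarrow> nat \<Rightarrow> real vec" where
  "v_vec m q j = vec (2 * m) (\<lambda>k. v_entry m q j (k + 1))"

end

theory Submission
  imports Defs
begin
lemma v1: "m - j < k \<Longrightarrow> k \<le> m \<Longrightarrow> v_entry m q j k = real q ^ j" by (simp add: v_entry_def)
lemma v2: "m < k \<Longrightarrow> k \<le> m + j \<Longrightarrow> v_entry m q j k = -1" by (simp add: v_entry_def)
lemma v3: "j \<le> m \<Longrightarrow> k \<le> m - j \<Longrightarrow> v_entry m q j k = 0" by (auto simp add: v_entry_def)
lemma v4: "m + j < k \<Longrightarrow> v_entry m q j k = 0" by (simp add: v_entry_def)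

lemma local_id:
  fixes m j q a :: nat
  assumes "1 \<le> j" "j \<le> m" "a \<le> 2*m"
  shows "- (real q ^ (m+1)) * (v_entry m q j (2*m+1-a) - v_entry m q j (2*m-a))
         = real q ^ (a+1) * (v_entry m q j a - v_entry m q j (a+1))"
proof -
  let ?A = "v_entry m q j (2*m+1-a)" and ?B = "v_entry m q j (2*m-a)"
    and ?C = "v_entry m q j a" and ?D = "v_entry m q j (a+1)"
  consider "a + j < m" | "a + j = m" | "m < a + j \<and> a < m" | "a = m" | "m < a \<and> a < m + j"
    | "a = m + j" | "m + j < a" by linarith
  then show ?thesis
  proof cases
    case 1
    have "?A = 0" using 1 by (intro v4) linarith
    moreover have "?B = 0" using 1 by (intro v4) linarith
    moreover have "?C = 0" using 1 assms by (intro v3) linarith+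
    moreover have "?D = 0" using 1 assms by (intro v3) linarith+
    ultimately show ?thesis by simp
  next
    case 2
    have "?A = 0" using 2 assms by (intro v4) linarith
    moreover have "?B = -1" using 2 assms by (intro v2) linarith+
    moreover have "?C = 0" using 2 assms by (intro v3) linarith+
    moreover have "?D = real q ^ j" using 2 assms by (intro v1) linarith+
    moreover have "real q ^ m = real q ^ a * real q ^ j" using 2 by (metis power_add)
    ultimately show ?thesis by simp
  next
    case 3
    have "?A = -1" using 3 assms by (intro v2) linarith+
    moreover have "?B = -1" using 3 assms by (intro v2) linarith+
    moreover have "?C = real q ^ j" using 3 assms by (intro v1) linarith+
    moreover have "?D = real q ^ j" using 3 assms by (intro v1) linarith+
    ultimately show ?thesis by simp
  next
    case 4
    have "?A = -1" using 4 assms by (intro v2) linarith+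
    moreover have "?B = real q ^ j" using 4 assms by (intro v1) linarith+
    moreover have "?C = real q ^ j" using 4 assms by (intro v1) linarith+
    moreover have "?D = -1" using 4 assms by (intro v2) linarith+
    ultimately show ?thesis using 4 by (simp add: algebra_simps)
  next
    case 5
    have "?A = real q ^ j" using 5 assms by (intro v1) linarith+
    moreover have "?B = real q ^ j" using 5 assms by (intro v1) linarith+
    moreover have "?C = -1" using 5 assms by (intro v2) linarith+
    moreover have "?D = -1" using 5 assms by (intro v2) linarith+
    ultimately show ?thesis by simp
  next
    case 6
    have "?A = real q ^ j" using 6 assms by (intro v1) linarith+
    moreover have "?B = 0" using 6 assms by (intro v3) linarith+
    moreover have "?C = -1" using 6 assms by (intro v2) linarith+
    moreover have "?D = 0" using 6 assms by (intro v4) linarith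
    moreover have "real q ^ m * real q ^ j = real q ^ a" using 6 by (metis power_add)
    ultimately show ?thesis by simp
  next
    case 7
    have "?A = 0" using 7 assms by (intro v3) linarith+
    moreover have "?B = 0" using 7 assms by (intro v3) linarith+
    moreover have "?C = 0" using 7 assms by (intro v4) linarith
    moreover have "?D = 0" using 7 assms by (intro v4) linarith
    ultimately show ?thesis by simp
  qed
qed

lemma delta_sum:
  fixes m a :: nat and f :: "nat \<Rightarrow> real"
  shows "(\<Sum>k<2*m. if k+1 = a then f (k+1) else 0) = (if 1 \<le> a \<and> a \<le> 2*m then f a else 0)"
proof (cases "1 \<le> a \<and> a \<le> 2*m")
  case True
  define b where "b = a - 1"
  have b: "a = b + 1" "b < 2*m" using True unfolding b_def by auto
  have "(\<Sum>k<2*m. if k+1 = a then f (k+1) else 0) = (\<Sum>k<2*m. if k = b then f (k+1) else 0)"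
    using b by (intro sum.cong) auto
  also have "\<dots> = f a" using b by simp
  finally show ?thesis using True by simp
next
  case False
  then have "(\<Sum>k<2*m. if k+1 = a then f (k+1) else 0) = 0" by (intro sum.neutral) auto
  then show ?thesis unfolding if_not_P[OF False] .
qed

definition Sp :: "nat \<Rightarrow> nat \<Rightarrow> nat \<Rightarrow> nat \<Rightarrow> real" where
  "Sp m q j a = (\<Sum>k<2*m. if a \<le> k+1 then real q ^ (k+1) * v_entry m q j (k+1) else 0)"

lemma v_out: "j \<le> m \<Longrightarrow> \<not> (1 \<le> a \<and> a \<le> 2*m) \<Longrightarrow> v_entry m q j a = 0"
  unfolding v_entry_def by auto

lemma delta_v: "j \<le> m \<Longrightarrow>
  (\<Sum>k<2*m. if k+1 = a then real q ^ (k+1) * v_entry m q j (k+1) else 0) = real q ^ a * v_entry m q j a"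
  using delta_sum[where m=m and a=a and f="\<lambda>x. real q ^ x * v_entry m q j x"] v_out[of j m a q] by auto

lemma Sp_step: "j \<le> m \<Longrightarrow> Sp m q j a = real q ^ a * v_entry m q j a + Sp m q j (a+1)"
proof -
  assume jm: "j \<le> m"
  have "Sp m q j a = (\<Sum>k<2*m. (if k+1 = a then real q ^ (k+1) * v_entry m q j (k+1) else 0)
      + (if a+1 \<le> k+1 then real q ^ (k+1) * v_entry m q j (k+1) else 0))"
    unfolding Sp_def by (intro sum.cong) auto
  also have "\<dots> = (\<Sum>k<2*m. if k+1 = a then real q ^ (k+1) * v_entry m q j (k+1) else 0)
      + Sp m q j (a+1)"
    unfolding sum.distrib Sp_def ..
  finally show ?thesis using delta_v[OF jm] by simp
qed

lemma main_id:
  fixes m j q :: nat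
  assumes "1 \<le> j" "j \<le> m"
  shows "d \<le> 2*m+1 \<Longrightarrow> (real q - 1) * Sp m q j (2*m+1-d) + real q ^ (2*m+1-d) * v_entry m q j (2*m+1-d)
     = - (real q ^ (m+1)) * v_entry m q j d"
proof (induction d)
  case 0
  have "Sp m q j (2*m+1) = 0" unfolding Sp_def by (intro sum.neutral) auto
  then show ?case using assms by (simp add: v_entry_def)
next
  case (Suc d)
  define a where "a = 2*m - d"
  have a1: "2*m+1-Suc d = a" and a2: "2*m+1-d = a+1" and ale: "a \<le> 2*m" and ad: "2*m+1-a = Suc d"
    "2*m - a = d"
    using Suc.prems unfolding a_def by auto
  have IH: "(real q - 1) * Sp m q j (a+1) + real q ^ (a+1) * v_entry m q j (a+1)
     = - (real q ^ (m+1)) * v_entry m q j d" using Suc a2 by auto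
  have L: "- (real q ^ (m+1)) * (v_entry m q j (Suc d) - v_entry m q j d)
         = real q ^ (a+1) * (v_entry m q j a - v_entry m q j (a+1))"
    using local_id[OF assms ale] ad by simp
  show ?case unfolding a1 Sp_step[OF assms(2), of q a]
    using IH L by (simp add: algebra_simps)
qed


theorem mainTheorem4:
  fixes m j q :: nat
  assumes "m \<ge> 1"
    and "j \<in> {1..m}"
    and "\<exists>p k. prime p \<and> k \<ge> 1 \<and> q = p ^ k"
  shows "eigenvector (Q_mat (2 * m - 1) q) (v_vec m q j)
           (- (real q ^ (((2 * m - 1)^2 - 1) div 2)))"
proof -
  obtain p k where pk: "prime p" "k \<ge> 1" "q = p ^ k" using assms(3) by blast
  have q0: "q > 0" using pk prime_gt_0_nat by simp
  have j: "1 \<le> j" "j \<le> m" using assms(2) by auto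
  obtain t where t: "m = Suc t" using assms(1) by (cases m) auto
  define N where "N = ((2 * m - 1)^2 - (2*m-1)) div 2"
  define lam where "lam = - (real q ^ (((2 * m - 1)^2 - 1) div 2))"
  have N: "N = (2*t+1)*t" unfolding N_def t by (simp add: power2_eq_square algebra_simps)
  have E: "((2 * m - 1)^2 - 1) div 2 = 2*t*(t+1)" unfolding t by (simp add: power2_eq_square algebra_simps)
  define c where "c = real q powi (int N - 2)"
  have cE: "c * real q ^ (m+1) = real q ^ (((2 * m - 1)^2 - 1) div 2)"
  proof -
    have "c * real q ^ (m+1) = real q powi (int N - 2) * real q powi int (m+1)"
      unfolding c_def power_int_of_nat ..
    also have "\<dots> = real q powi (int N - 2 + int (m+1))"
      by (rule power_int_add[symmetric]) (use q0 in simp)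
    also have "int N - 2 + int (m+1) = int (2*t*(t+1))" unfolding N t by (simp add: algebra_simps)
    finally show ?thesis unfolding E power_int_of_nat .
  qed
  have dimQ: "dim_row (Q_mat (2 * m - 1) q) = 2*m" "dim_col (Q_mat (2 * m - 1) q) = 2*m"
    unfolding Q_mat_def using assms(1) by auto
  have dimv: "dim_vec (v_vec m q j) = 2*m" unfolding v_vec_def by simp
  have row: "(Q_mat (2 * m - 1) q *\<^sub>v v_vec m q j) $ i = lam * v_vec m q j $ i"
    if i: "i < 2*m" for i
  proof -
    define a where "a = 2*m - i"
    have "(Q_mat (2 * m - 1) q *\<^sub>v v_vec m q j) $ i
        = (\<Sum>k\<in>{0..<2*m}. row (Q_mat (2 * m - 1) q) i $ k * v_vec m q j $ k)"
      using i dimQ dimv by (simp add: scalar_prod_def)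
    also have "\<dots> = (\<Sum>k<2*m. Q_entry (2*m-1) q (i+1) (k+1) * v_entry m q j (k+1))"
      unfolding lessThan_atLeast0
    proof (intro sum.cong refl)
      fix k assume "k \<in> {0..<2*m}"
      then have k: "k < 2*m" by simp
      show "row (Q_mat (2 * m - 1) q) i $ k * v_vec m q j $ k
          = Q_entry (2*m-1) q (i+1) (k+1) * v_entry m q j (k+1)"
        using i k dimQ assms(1) unfolding Q_mat_def v_vec_def by simp
    qed
    also have "\<dots> = (\<Sum>k<2*m. c * ((real q - 1) * (if a \<le> k+1 then real q ^ (k+1) * v_entry m q j (k+1) else 0)
        + (if k+1 = a then real q ^ (k+1) * v_entry m q j (k+1) else 0)))"
    proof (intro sum.cong refl)
      fix k assume k: "k \<in> {..<2*m}"
      have pw: "real q powi (int N + int (k+1) - 2) = c * real q ^ (k+1)"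
      proof -
        have e: "int N + int (k+1) - 2 = (int N - 2) + int (k+1)" by simp
        have "real q powi ((int N - 2) + int (k+1)) = real q powi (int N - 2) * real q powi int (k+1)"
          by (rule power_int_add) (use q0 in simp)
        then show ?thesis unfolding e c_def power_int_of_nat .
      qed
      have c1: "((i+1)+(k+1) < 2*m-1+2) = (\<not> a \<le> k+1)" using assms(1) i unfolding a_def by linarith
      have c2: "((i+1)+(k+1) = 2*m-1+2) = (k+1 = a)" using assms(1) i unfolding a_def by linarith
      have Qe: "Q_entry (2*m-1) q (i+1) (k+1) = (if a \<le> k+1 then (real q - 1 + (if k+1 = a then 1 else 0)) * (c * real q ^ (k+1)) else 0)"
        unfolding Q_entry_def N_def[symmetric] c1 c2 pw by simp
      show "Q_entry (2*m-1) q (i+1) (k+1) * v_entry m q j (k+1) = c * ((real q - 1) * (if a \<le> k+1 then real q ^ (k+1) * v_entry m q j (k+1) else 0)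
        + (if k+1 = a then real q ^ (k+1) * v_entry m q j (k+1) else 0))"
        unfolding Qe by (cases "a \<le> k+1"; cases "k+1 = a") (simp_all add: algebra_simps)
    qed
    also have "\<dots> = c * ((real q - 1) * (\<Sum>k<2*m. if a \<le> k+1 then real q ^ (k+1) * v_entry m q j (k+1) else 0)
        + (\<Sum>k<2*m. if k+1 = a then real q ^ (k+1) * v_entry m q j (k+1) else 0))"
      by (simp only: sum_distrib_left sum.distrib[symmetric])
    also have "\<dots> = c * ((real q - 1) * Sp m q j a + real q ^ a * v_entry m q j a)"
      unfolding Sp_def delta_v[OF j(2)] ..
    also have "\<dots> = c * (- (real q ^ (m+1)) * v_entry m q j (i+1))"
    proof -
      have "2*m+1-(i+1) = a" unfolding a_def by simp
      then show ?thesis using main_id[OF j, of "i+1" q] i by simp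
    qed
    also have "\<dots> = lam * v_vec m q j $ i"
      using cE i unfolding v_vec_def lam_def by simp
    finally show ?thesis .
  qed
  have nz: "v_vec m q j \<noteq> 0\<^sub>v (2*m)"
  proof
    assume "v_vec m q j = 0\<^sub>v (2*m)"
    then have "v_vec m q j $ (m-1) = 0" using j by simp
    moreover have "v_vec m q j $ (m-1) = real q ^ j" unfolding v_vec_def using j
      by (simp add: v_entry_def)
    ultimately show False using q0 by simp
  qed
  have "Q_mat (2 * m - 1) q *\<^sub>v v_vec m q j = lam \<cdot>\<^sub>v v_vec m q j"
  proof (rule eq_vecI)
    fix i assume "i < dim_vec (lam \<cdot>\<^sub>v v_vec m q j)"
    then have i: "i < 2*m" using dimv by simp
    show "(Q_mat (2 * m - 1) q *\<^sub>v v_vec m q j) $ i = (lam \<cdot>\<^sub>v v_vec m q j) $ i"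
      using row[OF i] i dimv by simp
  next
    show "dim_vec (Q_mat (2 * m - 1) q *\<^sub>v v_vec m q j) = dim_vec (lam \<cdot>\<^sub>v v_vec m q j)"
      using dimQ dimv by simp
  qed
  moreover have "v_vec m q j \<in> carrier_vec (2*m)" by (rule carrier_vecI) (rule dimv)
  ultimately show ?thesis unfolding eigenvector_def dimQ(1) lam_def[symmetric]
    using nz by blast
qed

end
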